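(* Let $G\in\mathcal{F}$ and let $C$ be a clique of maximum size in $G$, chosen among all maximum cliques so that the number of edges with exactly one endpoint in $C$ is minimal. Then the vertex set of $C$ can be partitioned into two nonempty subsets $X$ and $Y$ such that for every vertex $v$ not in $C$, the set of neighbors of $v$ in $C$ is equal to $X$, to $Y$, or to $\emptyset$.
   Context: Graphs are finite and simple; spectrum means adjacency spectrum. $\mathcal{F}$ denotes the set of connected graphs whose spectrum consists of exactly one eigenvalue $r>2$, exactly one eigenvalue $s<-1$, and all remaining eigenvalues (with multiplicity) equal to $2$ or $-1$. *)

theory Defs
  imports "Jordan_Normal_Form.Char_Poly"
begin

text \<open>A finite simple graph on vertex set {0..<n} with adjacency relation E
  (only its restriction to {0..<n} matters).\<close>

definition simple_graph :: "nat \<Rightarrow> (nat \<Rightarrow> nat \<Rightarrow> bool) \<Rightarrow> bool" where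
  "simple_graph n E \<longleftrightarrow> (\<forall>u<n. \<forall>v<n. E u v \<longleftrightarrow> E v u) \<and> (\<forall>v<n. \<not> E v v)"

definition adj_mat :: "nat \<Rightarrow> (nat \<Rightarrow> nat \<Rightarrow> bool) \<Rightarrow> real mat" where
  "adj_mat n E = mat n n (\<lambda>(i,j). if E i j then 1 else 0)"

definition connected_graph :: "nat \<Rightarrow> (nat \<Rightarrow> nat \<Rightarrow> bool) \<Rightarrow> bool" where
  "connected_graph n E \<longleftrightarrow> n > 0 \<and>
     (\<forall>u<n. \<forall>v<n. (\<lambda>x y. x < n \<and> y < n \<and> E x y)\<^sup>*\<^sup>* u v)"

text \<open>Spectrum (with multiplicity) = roots of the characteristic polynomial:
  r once, s once, 2 with some multiplicity a, -1 with some multiplicity b.\<close>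
definition in_F :: "nat \<Rightarrow> (nat \<Rightarrow> nat \<Rightarrow> bool) \<Rightarrow> bool" where
  "in_F n E \<longleftrightarrow> simple_graph n E \<and> connected_graph n E \<and>
     (\<exists>r s :: real. \<exists>a b :: nat. r > 2 \<and> s < -1 \<and>
        char_poly (adj_mat n E) = [:-r,1:] * [:-s,1:] * [:-2,1:]^a * [:1,1:]^b)"

definition is_clique :: "nat \<Rightarrow> (nat \<Rightarrow> nat \<Rightarrow> bool) \<Rightarrow> nat set \<Rightarrow> bool" where
  "is_clique n E C \<longleftrightarrow> C \<subseteq> {0..<n} \<and> (\<forall>u\<in>C. \<forall>v\<in>C. u \<noteq> v \<longrightarrow> E u v)"

definition is_max_clique :: "nat \<Rightarrow> (nat \<Rightarrow> nat \<Rightarrow> bool) \<Rightarrow> nat set \<Rightarrow> bool" where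
  "is_max_clique n E C \<longleftrightarrow> is_clique n E C \<and> (\<forall>D. is_clique n E D \<longrightarrow> card D \<le> card C)"

definition boundary_edges :: "nat \<Rightarrow> (nat \<Rightarrow> nat \<Rightarrow> bool) \<Rightarrow> nat set \<Rightarrow> nat" where
  "boundary_edges n E C = card {(u,v). u \<in> C \<and> v \<in> {0..<n} - C \<and> E u v}"

end

theory Submission
  imports Defs "Jordan_Normal_Form.Schur_Decomposition"
begin

type_synonym fm = "nat \<Rightarrow> nat \<Rightarrow> real"

definition mm :: "nat \<Rightarrow> fm \<Rightarrow> fm \<Rightarrow> fm" where
  "mm n X Y = (\<lambda>i j. if i < n \<and> j < n then (\<Sum>k<n. X i k * Y k j) else 0)"
definition idm :: "nat \<Rightarrow> fm" where
  "idm n = (\<lambda>i j. if i < n \<and> j < n \<and> i = j then 1 else 0)"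
definition madd :: "fm \<Rightarrow> fm \<Rightarrow> fm" where
  "madd X Y = (\<lambda>i j. X i j + Y i j)"
definition msc :: "real \<Rightarrow> fm \<Rightarrow> fm" where
  "msc c X = (\<lambda>i j. c * X i j)"
definition zo :: "nat \<Rightarrow> fm \<Rightarrow> bool" where
  "zo n X \<longleftrightarrow> (\<forall>i j. \<not> (i < n \<and> j < n) \<longrightarrow> X i j = 0)"

fun hor :: "nat \<Rightarrow> fm \<Rightarrow> real list \<Rightarrow> fm" where
  "hor n A [] = (\<lambda>i j. 0)"
| "hor n A (c # cs) = madd (msc c (idm n)) (mm n A (hor n A cs))"

definition pe :: "nat \<Rightarrow> fm \<Rightarrow> real poly \<Rightarrow> fm" where
  "pe n A p = hor n A (coeffs p)"

lemma mm_assoc: "mm n (mm n X Y) Z = mm n X (mm n Y Z)"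
proof (rule ext, rule ext)
  fix i j
  show "mm n (mm n X Y) Z i j = mm n X (mm n Y Z) i j"
  proof (cases "i < n \<and> j < n")
    case True
    have "mm n (mm n X Y) Z i j = (\<Sum>k<n. (\<Sum>l<n. X i l * Y l k) * Z k j)"
      using True by (simp add: mm_def)
    also have "\<dots> = (\<Sum>k<n. \<Sum>l<n. X i l * Y l k * Z k j)"
      by (simp add: sum_distrib_right)
    also have "\<dots> = (\<Sum>l<n. \<Sum>k<n. X i l * Y l k * Z k j)"
      by (rule sum.swap)
    also have "\<dots> = (\<Sum>l<n. X i l * (\<Sum>k<n. Y l k * Z k j))"
      by (simp add: sum_distrib_left mult.assoc)
    also have "\<dots> = mm n X (mm n Y Z) i j"
      using True by (simp add: mm_def)
    finally show ?thesis .
  qed (auto simp: mm_def)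
qed

lemma mm_zero_r[simp]: "mm n X (\<lambda>i j. 0) = (\<lambda>i j. 0)"
  by (auto simp: mm_def intro!: ext)
lemma mm_zero_l[simp]: "mm n (\<lambda>i j. 0) X = (\<lambda>i j. 0)"
  by (auto simp: mm_def intro!: ext)

lemma mm_madd_r: "mm n X (madd Y Z) = madd (mm n X Y) (mm n X Z)"
  by (auto simp: mm_def madd_def algebra_simps sum.distrib intro!: ext)
lemma mm_madd_l: "mm n (madd X Y) Z = madd (mm n X Z) (mm n Y Z)"
  by (auto simp: mm_def madd_def algebra_simps sum.distrib intro!: ext)
lemma mm_msc_r: "mm n X (msc c Y) = msc c (mm n X Y)"
  by (auto simp: mm_def msc_def algebra_simps sum_distrib_left intro!: ext)
lemma mm_msc_l: "mm n (msc c X) Y = msc c (mm n X Y)"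
  by (auto simp: mm_def msc_def algebra_simps sum_distrib_left intro!: ext)

lemma sum_delta_gen: "(\<Sum>k<(n::nat). (if j = k then c k else 0)) = (if j < n then c j else (0::real))"
  by (induct n) auto
lemma sum_delta_nat2: "j < (n::nat) \<Longrightarrow> (\<Sum>k<n. (if j = k then 1 else 0) * c k) = (c j :: real)"
proof -
  assume "j < n"
  have "(\<Sum>k<n. (if j = k then 1 else 0) * c k) = (\<Sum>k<n. (if j = k then c k else 0))"
    by (rule sum.cong) auto
  thus ?thesis using sum_delta_gen \<open>j < n\<close> by simp
qed
lemma sum_delta_nat3: "j < (n::nat) \<Longrightarrow> (\<Sum>k<n. c k * (if k = j then 1 else 0)) = (c j :: real)"
proof -
  assume "j < n"
  have "(\<Sum>k<n. c k * (if k = j then 1 else 0)) = (\<Sum>k<n. (if j = k then c k else 0))"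
    by (rule sum.cong) auto
  thus ?thesis using sum_delta_gen \<open>j < n\<close> by simp
qed
lemma msc_one[simp]: "msc 1 X = X" by (simp add: msc_def)

lemma mm_idm_l: "zo n X \<Longrightarrow> mm n (idm n) X = X"
proof (rule ext, rule ext)
  fix i j assume "zo n X"
  thus "mm n (idm n) X i j = X i j"
    by (cases "i < n \<and> j < n") (auto simp: zo_def mm_def idm_def sum_delta_nat2)
qed
lemma mm_idm_r: "zo n X \<Longrightarrow> mm n X (idm n) = X"
proof (rule ext, rule ext)
  fix i j assume "zo n X"
  thus "mm n X (idm n) i j = X i j"
    by (cases "i < n \<and> j < n") (auto simp: zo_def mm_def idm_def sum_delta_nat3)
qed

lemma zo_mm[simp]: "zo n (mm n X Y)" by (simp add: zo_def mm_def)
lemma zo_idm[simp]: "zo n (idm n)" by (simp add: zo_def idm_def)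
lemma zo_madd[simp]: "zo n X \<Longrightarrow> zo n Y \<Longrightarrow> zo n (madd X Y)" by (simp add: zo_def madd_def)
lemma zo_msc[simp]: "zo n X \<Longrightarrow> zo n (msc c X)" by (simp add: zo_def msc_def)
lemma zo_zero[simp]: "zo n (\<lambda>i j. 0)" by (simp add: zo_def)

lemma zo_hor[simp]: "zo n (hor n A cs)"
  by (induct cs) auto
lemma zo_pe[simp]: "zo n (pe n A p)"
  by (simp add: pe_def)

lemma madd_zero_l[simp]: "madd (\<lambda>i j. 0) X = X" by (simp add: madd_def)
lemma madd_zero_r[simp]: "madd X (\<lambda>i j. 0) = X" by (simp add: madd_def)
lemma msc_zero[simp]: "msc 0 X = (\<lambda>i j. 0)" by (simp add: msc_def)
lemma msc_zero2[simp]: "msc c (\<lambda>i j. 0) = (\<lambda>i j. 0)" by (simp add: msc_def)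

lemma pe_0[simp]: "pe n A 0 = (\<lambda>i j. 0)" by (simp add: pe_def)

lemma pe_pCons: "pe n A (pCons a p) = madd (msc a (idm n)) (mm n A (pe n A p))"
proof (cases "a = 0 \<and> p = 0")
  case True thus ?thesis by (simp add: pe_def)
next
  case False
  hence "coeffs (pCons a p) = a # coeffs p"
    by (auto simp: cCons_def)
  thus ?thesis by (simp add: pe_def)
qed

lemma pe_add: "pe n A (p + q) = madd (pe n A p) (pe n A q)"
proof (induct p arbitrary: q rule: pCons_induct)
  case 0 thus ?case by simp
next
  case (pCons a p)
  show ?case
  proof (cases q rule: pCons_cases)
    case (pCons b q')
    show ?thesis unfolding pCons add_pCons pe_pCons pCons.hyps mm_madd_r
      by (auto simp: madd_def msc_def algebra_simps intro!: ext)
  qed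
qed

lemma pe_smult: "pe n A (Polynomial.smult c p) = msc c (pe n A p)"
proof (induct p rule: pCons_induct)
  case 0 thus ?case by simp
next
  case (pCons a p)
  show ?case unfolding smult_pCons pe_pCons pCons.hyps mm_msc_r
    by (auto simp: madd_def msc_def algebra_simps intro!: ext)
qed

lemma pe_mult: "pe n A (p * q) = mm n (pe n A p) (pe n A q)"
proof (induct p rule: pCons_induct)
  case 0 thus ?case by simp
next
  case (pCons a p)
  have "pe n A (pCons a p * q) = pe n A (Polynomial.smult a q + pCons 0 (p * q))"
    by simp
  also have "\<dots> = madd (msc a (pe n A q)) (mm n A (mm n (pe n A p) (pe n A q)))"
    unfolding pe_add pe_smult pe_pCons pCons.hyps by simp
  also have "\<dots> = mm n (pe n A (pCons a p)) (pe n A q)"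
    unfolding pe_pCons mm_madd_l mm_msc_l mm_assoc mm_idm_l[OF zo_pe] ..
  finally show ?case .
qed

lemma pe_const: "pe n A [:c:] = msc c (idm n)"
  using pe_pCons[of n A c 0] by simp

lemma pe_x: "zo n A \<Longrightarrow> pe n A [:0,1:] = A"
  using pe_pCons[of n A 0 "[:1:]"] by (simp add: pe_const mm_msc_r mm_idm_r)

lemma pe_comm: "mm n (pe n A p) (pe n A q) = mm n (pe n A q) (pe n A p)"
proof -
  have "mm n (pe n A p) (pe n A q) = pe n A (p * q)" by (rule pe_mult[symmetric])
  also have "p * q = q * p" by (rule mult.commute)
  also have "pe n A (q * p) = mm n (pe n A q) (pe n A p)" by (rule pe_mult)
  finally show ?thesis .
qed

definition tp :: "fm \<Rightarrow> fm" where "tp X = (\<lambda>i j. X j i)"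
definition tr :: "nat \<Rightarrow> fm \<Rightarrow> real" where "tr n X = (\<Sum>i<n. X i i)"
definition mv :: "nat \<Rightarrow> fm \<Rightarrow> (nat \<Rightarrow> real) \<Rightarrow> (nat \<Rightarrow> real)" where
  "mv n X x = (\<lambda>i. if i < n then (\<Sum>j<n. X i j * x j) else 0)"
definition ip :: "nat \<Rightarrow> (nat \<Rightarrow> real) \<Rightarrow> (nat \<Rightarrow> real) \<Rightarrow> real" where
  "ip n x y = (\<Sum>i<n. x i * y i)"
definition qf :: "nat \<Rightarrow> fm \<Rightarrow> (nat \<Rightarrow> real) \<Rightarrow> (nat \<Rightarrow> real) \<Rightarrow> real" where
  "qf n X x y = ip n x (mv n X y)"
definition ut :: "fm \<Rightarrow> bool" where "ut B \<longleftrightarrow> (\<forall>i j. j < i \<longrightarrow> B i j = 0)"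

lemma tp_mm: "tp (mm n X Y) = mm n (tp Y) (tp X)"
  by (auto simp: tp_def mm_def mult.commute intro!: ext)
lemma tp_madd: "tp (madd X Y) = madd (tp X) (tp Y)" by (simp add: tp_def madd_def)
lemma tp_msc: "tp (msc c X) = msc c (tp X)" by (simp add: tp_def msc_def)
lemma tp_idm: "tp (idm n) = idm n" by (auto simp: tp_def idm_def intro!: ext)

lemma pe_comm_A: "zo n A \<Longrightarrow> mm n (pe n A p) A = mm n A (pe n A p)"
  using pe_comm[of n A p "[:0,1:]"] pe_x[of n A] by simp

lemma tp_pe: assumes "zo n A" "tp A = A" shows "tp (pe n A p) = pe n A p"
proof (induct p rule: pCons_induct)
  case 0 thus ?case by (simp add: tp_def)
next
  case (pCons a p)
  show ?case unfolding pe_pCons tp_madd tp_msc tp_idm tp_mm pCons.hyps assms(2)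
    pe_comm_A[OF assms(1)] ..
qed

lemma tr_mm_comm: "tr n (mm n X Y) = tr n (mm n Y X)"
proof -
  have "tr n (mm n X Y) = (\<Sum>i<n. \<Sum>k<n. X i k * Y k i)" by (simp add: tr_def mm_def)
  also have "\<dots> = (\<Sum>k<n. \<Sum>i<n. X i k * Y k i)" by (rule sum.swap)
  also have "\<dots> = tr n (mm n Y X)" by (simp add: tr_def mm_def mult.commute)
  finally show ?thesis .
qed

lemma tr_sim: assumes "mm n Q P = idm n" "zo n X"
  shows "tr n (mm n (mm n P X) Q) = tr n X"
proof -
  have "tr n (mm n (mm n P X) Q) = tr n (mm n Q (mm n P X))" by (rule tr_mm_comm)
  also have "\<dots> = tr n X" by (simp add: mm_assoc[symmetric] assms mm_idm_l)
  finally show ?thesis .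
qed

lemma mv_mm: "mv n (mm n X Y) x = mv n X (mv n Y x)"
proof
  fix i show "mv n (mm n X Y) x i = mv n X (mv n Y x) i"
  proof (cases "i < n")
    case True
    have "mv n (mm n X Y) x i = (\<Sum>j<n. (\<Sum>k<n. X i k * Y k j) * x j)"
      using True by (simp add: mv_def mm_def)
    also have "\<dots> = (\<Sum>j<n. \<Sum>k<n. X i k * Y k j * x j)" by (simp add: sum_distrib_right)
    also have "\<dots> = (\<Sum>k<n. \<Sum>j<n. X i k * Y k j * x j)" by (rule sum.swap)
    also have "\<dots> = mv n X (mv n Y x) i"
      using True by (simp add: mv_def sum_distrib_left mult.assoc)
    finally show ?thesis .
  qed (simp add: mv_def)
qed

lemma ip_mv_sym: assumes "tp X = X" shows "ip n x (mv n X y) = ip n (mv n X x) y"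
proof -
  have s: "X j i = X i j" for i j using assms by (metis tp_def)
  have "ip n x (mv n X y) = (\<Sum>i<n. \<Sum>j<n. x i * X i j * y j)"
    by (simp add: ip_def mv_def sum_distrib_left mult.assoc)
  also have "\<dots> = (\<Sum>j<n. \<Sum>i<n. x i * X i j * y j)" by (rule sum.swap)
  also have "\<dots> = (\<Sum>j<n. \<Sum>i<n. X j i * x i * y j)"
    by (intro sum.cong refl) (subst s, simp)
  also have "\<dots> = ip n (mv n X x) y"
    by (simp add: ip_def mv_def sum_distrib_right)
  finally show ?thesis .
qed

lemma ip_self_nonneg: "ip n x x \<ge> 0"
  by (simp add: ip_def sum_nonneg)

lemma qf_madd: "qf n (madd X Y) x y = qf n X x y + qf n Y x y"
  by (simp add: qf_def ip_def mv_def madd_def algebra_simps sum.distrib sum_distrib_left)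
lemma qf_msc: "qf n (msc c X) x y = c * qf n X x y"
  by (simp add: qf_def ip_def mv_def msc_def algebra_simps sum_distrib_left)

lemma qf_comb: assumes "tp X = X"
  shows "qf n X (\<lambda>i. a * x i + b * y i) (\<lambda>i. a * x i + b * y i)
     = a^2 * qf n X x x + 2 * a * b * qf n X x y + b^2 * qf n X y y"
proof -
  have s: "X j i = X i j" for i j using assms by (metis tp_def)
  have "qf n X x y = ip n (mv n X x) y" unfolding qf_def by (rule ip_mv_sym[OF assms])
  also have "\<dots> = qf n X y x" by (simp add: qf_def ip_def mult.commute)
  finally have e: "qf n X x y = qf n X y x" .
  have "qf n X (\<lambda>i. a * x i + b * y i) (\<lambda>i. a * x i + b * y i)
     = a*a * qf n X x x + a*b * qf n X x y + a*b * qf n X y x + b*b * qf n X y y"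
    by (simp add: qf_def ip_def mv_def algebra_simps sum.distrib sum_distrib_left)
  thus ?thesis using e by (simp add: power2_eq_square)
qed

lemma ut_pe: assumes "ut B"
  shows "ut (pe n B p) \<and> (\<forall>i<n. pe n B p i i = poly p (B i i))"
proof (induct p rule: pCons_induct)
  case 0 thus ?case by (simp add: ut_def)
next
  case (pCons a p)
  let ?P = "pe n B p"
  have u: "ut ?P" and d: "\<forall>i<n. ?P i i = poly p (B i i)" using pCons.hyps by auto
  have "ut (mm n B ?P)"
  proof -
    { fix i j :: nat assume ji: "j < i"
      have "(\<Sum>k<n. B i k * ?P k j) = 0"
      proof (rule sum.neutral, rule ballI)
        fix k show "B i k * ?P k j = 0"
          using assms u ji unfolding ut_def by (cases "k < i") auto
      qed }
    thus ?thesis by (simp add: ut_def mm_def)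
  qed
  hence "ut (pe n B (pCons a p))" unfolding pe_pCons
    by (simp add: ut_def madd_def msc_def idm_def)
  moreover
  { fix i :: nat assume i: "i < n"
    have "(\<Sum>k<n. B i k * ?P k i) = (\<Sum>k<n. if i = k then B i i * ?P i i else 0)"
    proof (rule sum.cong)
      fix k show "B i k * ?P k i = (if i = k then B i i * ?P i i else 0)"
        using assms u unfolding ut_def by (cases "k < i"; cases "i < k") auto
    qed simp
    also have "\<dots> = B i i * ?P i i" using sum_delta_gen[of i "\<lambda>_. B i i * ?P i i" n] i by simp
    finally have "pe n B (pCons a p) i i = poly (pCons a p) (B i i)"
      unfolding pe_pCons using i d by (simp add: madd_def msc_def idm_def mm_def) }
  ultimately show ?case by blast
qed

lemma pe_sim: assumes "zo n A" "zo n B" "zo n P" "zo n Q" "A = mm n (mm n P B) Q"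
  "mm n P Q = idm n" "mm n Q P = idm n"
  shows "pe n A p = mm n (mm n P (pe n B p)) Q"
proof (induct p rule: pCons_induct)
  case 0 thus ?case by simp
next
  case (pCons a p)
  have QP: "mm n Q (mm n P Z) = Z" if "zo n Z" for Z
    using that by (simp add: mm_assoc[symmetric] assms mm_idm_l)
  have "pe n A (pCons a p) = madd (msc a (idm n)) (mm n A (mm n (mm n P (pe n B p)) Q))"
    by (simp add: pe_pCons pCons.hyps)
  also have "\<dots> = mm n (mm n P (pe n B (pCons a p))) Q"
    unfolding pe_pCons assms(5)
    by (simp add: mm_madd_l mm_madd_r mm_msc_l mm_msc_r mm_assoc QP mm_idm_l
      assms(6)[unfolded mm_assoc] assms)
  finally show ?case .
qed

lemma trace_formula: assumes "zo n A" "zo n B" "zo n P" "zo n Q" "A = mm n (mm n P B) Q"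
  "mm n P Q = idm n" "mm n Q P = idm n" "ut B"
  shows "tr n (pe n A p) = (\<Sum>i<n. poly p (B i i))"
  unfolding pe_sim[OF assms(1-7)] tr_sim[OF assms(7) zo_pe]
  using ut_pe[OF assms(8), of n p] by (simp add: tr_def)

lemma sum_es: "sum_list (map g (r # s # replicate a 2 @ replicate b (-1))) =
   g r + g s + of_nat a * g 2 + of_nat b * g (-1 :: real)"
  by (simp add: sum_list_replicate add.assoc)

lemma three_roots_dvd:
  fixes D :: "real poly"
  assumes "poly D x = 0" "poly D y = 0" "poly D z = 0" "x \<noteq> y" "x \<noteq> z" "y \<noteq> z"
  shows "[:-x,1:] * [:-y,1:] * [:-z,1:] dvd D"
proof -
  from assms(1) obtain D1 where D1: "D = [:-x,1:] * D1"
    by (metis dvd_def dvd_iff_poly_eq_0 minus_minus)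
  have "poly D1 y = 0" using assms(2,4) D1 by simp
  then obtain D2 where D2: "D1 = [:-y,1:] * D2"
    by (metis dvd_def dvd_iff_poly_eq_0 minus_minus)
  have "poly D2 z = 0" using assms(3,5,6) D1 D2 by simp
  then obtain D3 where D3: "D2 = [:-z,1:] * D3"
    by (metis dvd_def dvd_iff_poly_eq_0 minus_minus)
  show ?thesis unfolding dvd_def using D1 D2 D3 by (metis mult.assoc)
qed

lemma lagrange_id:
  fixes a b :: "nat \<Rightarrow> real"
  shows "(\<Sum>j<n. \<Sum>l<n. (a j * b l - a l * b j)^2) =
     2 * ((\<Sum>j<n. a j ^ 2) * (\<Sum>l<n. b l ^ 2) - (\<Sum>j<n. a j * b j)^2)"
proof -
  have "(\<Sum>j<n. \<Sum>l<n. (a j * b l - a l * b j)^2) =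
     (\<Sum>j<n. \<Sum>l<n. a j ^ 2 * b l ^ 2) + (\<Sum>j<n. \<Sum>l<n. a l ^ 2 * b j ^ 2)
      - 2 * (\<Sum>j<n. \<Sum>l<n. (a j * b j) * (a l * b l))"
    by (simp add: power2_eq_square algebra_simps sum.distrib sum_subtractf sum_distrib_left)
  also have "(\<Sum>j<n. \<Sum>l<n. a l ^ 2 * b j ^ 2) = (\<Sum>j<n. \<Sum>l<n. a j ^ 2 * b l ^ 2)"
    by (subst sum.swap) simp
  finally show ?thesis
    by (simp add: power2_eq_square sum_product algebra_simps)
qed

lemma mv_idm: "i < n \<Longrightarrow> mv n (idm n) y i = y i"
proof -
  assume i: "i < n"
  have "mv n (idm n) y i = (\<Sum>j<n. (if i = j then 1 else 0) * y j)"
    using i by (auto simp: mv_def idm_def intro!: sum.cong)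
  also have "\<dots> = y i" by (rule sum_delta_nat2[OF i])
  finally show ?thesis .
qed

lemma ip_mv_idm: "ip n x (mv n (idm n) y) = ip n x y"
  unfolding ip_def by (intro sum.cong refl) (simp add: mv_idm)

lemma dsum_nonneg_zero:
  fixes G :: "nat \<Rightarrow> nat \<Rightarrow> real"
  assumes "(\<Sum>i<n. \<Sum>k<n. G i k) = 0" "\<And>i k. i < n \<Longrightarrow> k < n \<Longrightarrow> G i k \<ge> 0"
    "i < n" "k < n"
  shows "G i k = 0"
proof -
  have nn: "\<forall>i\<in>{..<n}. 0 \<le> (\<Sum>k<n. G i k)" using assms(2) by (auto intro: sum_nonneg)
  have "\<forall>i\<in>{..<n}. (\<Sum>k<n. G i k) = 0"
    using sum_nonneg_eq_0_iff[of "{..<n}" "\<lambda>i. \<Sum>k<n. G i k"] nn assms(1) by auto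
  hence "(\<Sum>k<n. G i k) = 0" using assms(3) by auto
  hence "\<forall>k\<in>{..<n}. G i k = 0"
    using sum_nonneg_eq_0_iff[of "{..<n}" "\<lambda>k. G i k"] assms(2,3) by auto
  thus ?thesis using assms(4) by auto
qed

lemma sq_sum_zero:
  fixes F :: "nat \<Rightarrow> nat \<Rightarrow> real"
  assumes "(\<Sum>i<n. \<Sum>k<n. (F i k)^2) = 0" "i < n" "k < n"
  shows "F i k = 0"
proof -
  have "\<forall>i\<in>{..<n}. (\<Sum>k<n. (F i k)^2) = 0"
    using assms(1) by (subst sum_nonneg_eq_0_iff[symmetric]) (auto intro: sum_nonneg)
  hence "(\<Sum>k<n. (F i k)^2) = 0" using assms(2) by auto
  hence "\<forall>k\<in>{..<n}. (F i k)^2 = 0" by (subst sum_nonneg_eq_0_iff[symmetric]) auto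
  thus ?thesis using assms(3) by auto
qed

lemma core:
  fixes A :: fm and r s :: real and a b :: nat
  assumes zA: "zo n A" and sA: "tp A = A"
    and TF: "\<And>p. tr n (pe n A p) = sum_list (map (poly p) (r # s # replicate a 2 @ replicate b (-1)))"
    and r: "r > 2" and s: "s < -1"
  defines "M \<equiv> madd A (idm n)"
  shows "(\<exists>w. qf n M w w < 0) \<and>
         (\<forall>x y. \<not> (qf n M x x < 0 \<and> qf n M y y < 0 \<and> qf n M x y = 0))"
proof -
  define f where "f = [:-r,1:] * [:-s,1:] * [:-2,1:] * [:1,1::real:]"
  define F where "F = pe n A f"
  have sF: "tp F = F" unfolding F_def by (rule tp_pe[OF zA sA])
  have sF': "F j i = F i j" for i j using sF by (metis tp_def)
  have froots: "poly f r = 0" "poly f s = 0" "poly f 2 = 0" "poly f (-1) = 0"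
    unfolding f_def poly_mult by simp_all
  have "tr n (pe n A (f * f)) = 0"
    unfolding TF sum_es poly_mult froots by simp
  hence "tr n (mm n F F) = 0" unfolding F_def pe_mult .
  moreover have "tr n (mm n F F) = (\<Sum>i<n. \<Sum>k<n. (F i k)^2)"
    unfolding tr_def
  proof (intro sum.cong refl)
    fix i assume "i \<in> {..<n}"
    thus "mm n F F i i = (\<Sum>k<n. (F i k)^2)"
      unfolding mm_def power2_eq_square using sF' by (auto intro!: sum.cong)
  qed
  ultimately have "(\<Sum>i<n. \<Sum>k<n. (F i k)^2) = 0" by simp
  hence "F i k = 0" if "i < n" "k < n" for i k using sq_sum_zero that by blast
  hence F0: "F = (\<lambda>i j. 0)" using zo_pe[of n A f] unfolding F_def zo_def by (auto intro!: ext)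
  have pe_dvd: "pe n A p = (\<lambda>i j. 0)" if "f dvd p" for p
  proof -
    from that obtain q where "p = f * q" by (auto simp: dvd_def)
    thus ?thesis by (simp add: pe_mult F0[unfolded F_def])
  qed
  define h where "h = [:-r,1:] * [:-2,1:] * [:1,1::real:]"
  define c where "c = poly h s"
  have c0: "c \<noteq> 0" unfolding c_def h_def poly_mult using r s by simp
  define e where "e = Polynomial.smult (1/c) h"
  define E where "E = pe n A e"
  have fh: "f = h * [:-s,1:]" unfolding f_def h_def by (simp only: mult.assoc mult.commute mult.left_commute)
  have sE: "tp E = E" unfolding E_def by (rule tp_pe[OF zA sA])
  have sE': "E j i = E i j" for i j using sE by (metis tp_def)
  have zE: "zo n E" unfolding E_def by simp
  have pes: "poly e s = 1" unfolding e_def poly_smult c_def[symmetric] using c0 by simp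
  have eroots: "poly e r = 0" "poly e 2 = 0" "poly e (-1) = 0"
    unfolding e_def h_def poly_smult poly_mult by simp_all
  have trE: "tr n E = 1"
    unfolding E_def TF sum_es using pes eroots by simp
  have EE: "mm n E E = E"
  proof -
    have "poly (e - 1) s = 0" using pes by simp
    then obtain g where g: "e - 1 = [:-s,1:] * g"
      by (metis dvd_def dvd_iff_poly_eq_0 minus_minus)
    have "e * e - e = e * (e - 1)" by (simp add: algebra_simps)
    also have "\<dots> = e * ([:-s,1:] * g)" by (simp add: g)
    also have "\<dots> = f * Polynomial.smult (1/c) g" unfolding e_def fh by (simp only: mult_smult_left mult_smult_right mult.assoc)
    finally have "e * e - e = f * Polynomial.smult (1/c) g" .
    hence "pe n A (e * e - e) = (\<lambda>i j. 0)" by (intro pe_dvd) (simp only: dvd_triv_left)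
    moreover have "pe n A (e * e - e) = madd (pe n A (e * e)) (msc (-1) (pe n A e))"
      using pe_add[of n A "e*e" "Polynomial.smult (-1) e"] pe_smult[of n A "-1" e] by simp
    ultimately have "madd (mm n E E) (msc (-1) E) = (\<lambda>i j. 0)" unfolding E_def pe_mult by simp
    thus ?thesis by (auto simp: madd_def msc_def fun_eq_iff)
  qed
  have AE: "mm n A E = msc s E"
  proof -
    have "[:-s,1:] * e = Polynomial.smult (1/c) f" unfolding e_def fh mult_smult_right by (simp only: mult.commute)
    hence "pe n A ([:-s,1:] * e) = (\<lambda>i j. 0)" by (intro pe_dvd) (simp add: dvd_smult)
    moreover have "pe n A [:-s,1:] = madd (msc (-s) (idm n)) A"
      using pe_pCons[of n A "-s" "[:1:]"] pe_const[of n A 1] by (simp add: mm_idm_r zA)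
    ultimately have "madd (msc (-s) (mm n (idm n) E)) (mm n A E) = (\<lambda>i j. 0)"
      unfolding pe_mult E_def by (simp add: mm_madd_l mm_msc_l)
    thus ?thesis using mm_idm_l[OF zE] by (auto simp: madd_def msc_def fun_eq_iff)
  qed
  have rowE: "(\<Sum>j<n. E i j * E k j) = E i k" if "i < n" "k < n" for i k
  proof -
    have "E i k = mm n E E i k" using EE by simp
    also have "\<dots> = (\<Sum>j<n. E i j * E k j)" using that by (simp add: mm_def sE'[of _ k])
    finally show ?thesis by simp
  qed
  have minor: "E i j * E k l = E i l * E k j" if "i < n" "k < n" "j < n" "l < n" for i j k l
  proof -
    have nn: "E i i * E k k - (E i k)^2 \<ge> 0" if "i < n" "k < n" for i k
    proof -
      have "0 \<le> (\<Sum>j<n. \<Sum>l<n. (E i j * E k l - E i l * E k j)^2)" by (intro sum_nonneg) auto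
      also have "\<dots> = 2 * (E i i * E k k - (E i k)^2)"
        unfolding lagrange_id using rowE[OF that(1) that(1)] rowE[OF that(2) that(2)] rowE[OF that]
        by (simp add: power2_eq_square)
      finally show ?thesis by simp
    qed
    have "(\<Sum>i<n. \<Sum>k<n. E i i * E k k - (E i k)^2) = (tr n E)^2 - (\<Sum>i<n. \<Sum>k<n. E i k * E k i)"
      by (simp add: tr_def power2_eq_square sum_subtractf sum_product sE'[of _ i for i] cong: sum.cong)
    also have "(\<Sum>i<n. \<Sum>k<n. E i k * E k i) = tr n (mm n E E)" by (simp add: tr_def mm_def)
    finally have "(\<Sum>i<n. \<Sum>k<n. E i i * E k k - (E i k)^2) = 0" using EE trE by simp
    hence z: "E i i * E k k - (E i k)^2 = 0" if "i < n" "k < n" for i k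
      using dsum_nonneg_zero[of "\<lambda>i k. E i i * E k k - (E i k)^2" n i k] nn that by blast
    have "(\<Sum>j<n. \<Sum>l<n. (E i j * E k l - E i l * E k j)^2) = 2 * (E i i * E k k - (E i k)^2)"
      unfolding lagrange_id using rowE[OF that(1) that(1)] rowE[OF that(2) that(2)] rowE[OF that(1,2)]
      by (simp add: power2_eq_square)
    also have "\<dots> = 0" using z[OF that(1,2)] by simp
    finally have "(\<Sum>j<n. \<Sum>l<n. (E i j * E k l - E i l * E k j)^2) = 0" .
    from sq_sum_zero[OF this that(3,4)] show ?thesis by simp
  qed
  have psd: "qf n M z z \<ge> 0" if Ez: "mv n E z = (\<lambda>i. 0)" for z
  proof -
    define l1 where "l1 = Polynomial.smult (1/((r-2)*(r+1))) ([:-2,1:] * [:1,1::real:])"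
    define l2 where "l2 = Polynomial.smult (1/((2-r)*3)) ([:-r,1:] * [:1,1::real:])"
    define D where "D = [:1,1:] - Polynomial.smult (r+1) (l1*l1) - Polynomial.smult 3 (l2*l2)"
    have r1: "r - 2 \<noteq> 0" "r + 1 \<noteq> 0" "2 - r \<noteq> 0" using r by auto
    have r2: "r * r \<noteq> r + 2" using mult_strict_right_mono[of 2 r r] r by linarith
    have "poly D r = 0" "poly D 2 = 0" "poly D (-1) = 0"
      unfolding D_def l1_def l2_def poly_diff poly_smult poly_mult using r1 r2
      by (simp_all add: field_simps)
    hence "[:-r,1:] * [:-2,1:] * [:-(-1),1:] dvd D"
      by (intro three_roots_dvd) (use r in auto)
    hence "h dvd D" unfolding h_def by simp
    then obtain q where q: "D = h * q" by (auto simp: dvd_def)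
    have hE: "pe n A h = msc c E"
      unfolding E_def e_def pe_smult using c0 by (simp add: msc_def)
    have M1: "M = pe n A [:1,1:]"
      using pe_pCons[of n A 1 "[:1:]"] pe_const[of n A 1] unfolding M_def
      by (simp add: mm_idm_r zA madd_def fun_eq_iff add.commute)
    have "[:1,1:] = Polynomial.smult (r+1) (l1*l1) + Polynomial.smult 3 (l2*l2) + q * h"
      using q unfolding D_def by (simp add: algebra_simps)
    hence "M = madd (madd (msc (r+1) (mm n (pe n A l1) (pe n A l1)))
                          (msc 3 (mm n (pe n A l2) (pe n A l2)))) (mm n (pe n A q) (msc c E))"
      unfolding M1 by (simp add: pe_add pe_smult pe_mult hE)
    hence e1: "qf n M z z = (r+1) * qf n (mm n (pe n A l1) (pe n A l1)) z z
        + 3 * qf n (mm n (pe n A l2) (pe n A l2)) z z + c * qf n (mm n (pe n A q) E) z z"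
      by (simp add: qf_madd qf_msc mm_msc_r)
    have e2: "qf n (mm n (pe n A q) E) z z = 0"
      unfolding qf_def mv_mm Ez by (simp add: ip_def mv_def)
    have e3: "qf n (mm n (pe n A l) (pe n A l)) z z \<ge> 0" for l
    proof -
      have "qf n (mm n (pe n A l) (pe n A l)) z z = ip n (mv n (pe n A l) z) (mv n (pe n A l) z)"
        unfolding qf_def mv_mm by (rule ip_mv_sym[OF tp_pe[OF zA sA]])
      thus ?thesis using ip_self_nonneg by simp
    qed
    have "(r+1) * qf n (mm n (pe n A l1) (pe n A l1)) z z \<ge> 0"
      using e3[of l1] r by simp
    moreover have "3 * qf n (mm n (pe n A l2) (pe n A l2)) z z \<ge> 0"
      using e3[of l2] by simp
    ultimately show ?thesis unfolding e1 e2 by linarith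
  qed
  have N1: "\<exists>w. qf n M w w < 0"
  proof -
    obtain j where j: "j < n" "E j j \<noteq> 0"
    proof (rule ccontr)
      assume "\<not> thesis"
      with that have "\<forall>j<n. E j j = 0" by blast
      hence "tr n E = 0" by (simp add: tr_def)
      with trE show False by simp
    qed
    define w where "w = (\<lambda>i. E i j)"
    have Aw: "mv n A w = (\<lambda>i. s * w i)"
    proof
      fix i show "mv n A w i = s * w i"
      proof (cases "i < n")
        case True
        have "mv n A w i = mm n A E i j" using True j by (simp add: mv_def mm_def w_def)
        thus ?thesis using AE by (simp add: msc_def w_def)
      next
        case False thus ?thesis using zE by (simp add: mv_def w_def zo_def)
      qed
    qed
    have "qf n M w w = (s + 1) * ip n w w"
      unfolding M_def qf_madd unfolding qf_def Aw ip_mv_idm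
      by (simp add: ip_def sum_distrib_left algebra_simps sum.distrib)
    moreover have "ip n w w > 0"
    proof -
      have "ip n w w \<ge> w j * w j" unfolding ip_def
        using j(1) by (intro member_le_sum) auto
      moreover have "w j * w j > 0" using j(2) by (auto simp: w_def zero_less_mult_iff linorder_neq_iff)
      ultimately show ?thesis by linarith
    qed
    ultimately have "qf n M w w < 0" using s by (simp add: mult_neg_pos)
    thus ?thesis by blast
  qed
  have N2: "\<not> (qf n M x x < 0 \<and> qf n M y y < 0 \<and> qf n M x y = 0)" for x y
  proof
    assume H: "qf n M x x < 0 \<and> qf n M y y < 0 \<and> qf n M x y = 0"
    have sM: "tp M = M" unfolding M_def by (simp add: tp_madd sA tp_idm)
    define u where "u = mv n E x"
    define v where "v = mv n E y"
    have par: "u i * v j = u j * v i" if "i < n" "j < n" for i j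
    proof -
      have "u i * v j = (\<Sum>k<n. \<Sum>l<n. E i k * E j l * x k * y l)"
        using that by (simp add: u_def v_def mv_def sum_product algebra_simps)
      also have "\<dots> = (\<Sum>k<n. \<Sum>l<n. E j k * E i l * x k * y l)"
        by (intro sum.cong refl) (metis minor that mult.commute lessThan_iff)
      also have "\<dots> = u j * v i"
        using that by (simp add: u_def v_def mv_def sum_product algebra_simps)
      finally show ?thesis .
    qed
    show False
    proof (cases "\<forall>j<n. v j = 0")
      case True
      hence "mv n E y = (\<lambda>i. 0)" by (auto simp: v_def mv_def fun_eq_iff)
      with psd[of y] H show False by simp
    next
      case False
      then obtain j where j: "j < n" "v j \<noteq> 0" by blast
      define vj where "vj = v j"
      define uj where "uj = u j"
      define z where "z = (\<lambda>i. vj * x i + (- uj) * y i)"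
      have "mv n E z = (\<lambda>i. vj * u i - uj * v i)"
      proof
        fix i show "mv n E z i = vj * u i - uj * v i"
        proof (cases "i < n")
          case True
          have "mv n E z i = vj * (\<Sum>k<n. E i k * x k) - uj * (\<Sum>k<n. E i k * y k)"
            using True by (simp add: z_def mv_def algebra_simps sum.distrib sum_distrib_left
              sum_subtractf)
          thus ?thesis using True by (simp add: u_def v_def mv_def)
        qed (simp add: mv_def u_def v_def)
      qed
      also have "\<dots> = (\<lambda>i. 0)"
        unfolding vj_def uj_def
      proof
        fix i show "v j * u i - u j * v i = 0"
        proof (cases "i < n")
          case True thus ?thesis using par[OF True j(1)] by (simp add: mult.commute)
        next
          case False thus ?thesis by (simp add: u_def v_def mv_def)
        qed
      qed
      finally have "qf n M z z \<ge> 0" by (rule psd)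
      moreover have "qf n M z z = (v j)^2 * qf n M x x + (u j)^2 * qf n M y y"
        unfolding z_def qf_comb[OF sM] using H by (simp add: vj_def uj_def)
      moreover have "(v j)^2 * qf n M x x < 0" using j H by (simp add: mult_pos_neg)
      moreover have "(u j)^2 * qf n M y y \<le> 0" using H by (simp add: mult_nonneg_nonpos)
      ultimately show False by linarith
    qed
  qed
  show ?thesis using N1 N2 by blast
qed

definition cv :: "nat \<Rightarrow> real mat \<Rightarrow> fm" where
  "cv n X = (\<lambda>i j. if i < n \<and> j < n then X $$ (i,j) else 0)"

lemma zo_cv[simp]: "zo n (cv n X)" by (simp add: zo_def cv_def)

lemma cv_mult: assumes "X \<in> carrier_mat n n" "Y \<in> carrier_mat n n"
  shows "cv n (X * Y) = mm n (cv n X) (cv n Y)"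
proof (intro ext)
  fix i j
  show "cv n (X * Y) i j = mm n (cv n X) (cv n Y) i j"
  proof (cases "i < n \<and> j < n")
    case True
    have "cv n (X * Y) i j = row X i \<bullet> col Y j" using True assms by (simp add: cv_def)
    also have "\<dots> = (\<Sum>k<n. X $$ (i,k) * Y $$ (k,j))"
      using True assms by (simp add: scalar_prod_def atLeast0LessThan)
    also have "\<dots> = mm n (cv n X) (cv n Y) i j"
      using True by (simp add: mm_def cv_def)
    finally show ?thesis .
  qed (auto simp: cv_def mm_def)
qed

lemma cv_one: "cv n (1\<^sub>m n) = idm n"
  by (auto simp: cv_def idm_def intro!: ext)

lemma inF_spec:
  assumes "in_F n E"
  defines "Mv \<equiv> (\<lambda>i j. (if E i j then 1 else 0) + (if i = j then 1 else (0::real)))"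
  shows "(\<exists>w. (\<Sum>i<n. w i * (\<Sum>j<n. Mv i j * w j)) < 0) \<and>
         (\<forall>x y. \<not> ((\<Sum>i<n. x i * (\<Sum>j<n. Mv i j * x j)) < 0 \<and>
                     (\<Sum>i<n. y i * (\<Sum>j<n. Mv i j * y j)) < 0 \<and>
                     (\<Sum>i<n. x i * (\<Sum>j<n. Mv i j * y j)) = 0))"
proof -
  from assms(1) obtain r s :: real and a b :: nat where
    sg: "simple_graph n E" and r: "r > 2" and s: "s < -1"
    and cp: "char_poly (adj_mat n E) = [:-r,1:] * [:-s,1:] * [:-2,1:]^a * [:1,1:]^b"
    unfolding in_F_def by blast
  define es where "es = r # s # replicate a 2 @ replicate b (-1::real)"
  define AJ where "AJ = adj_mat n E"
  have AJc: "AJ \<in> carrier_mat n n" by (simp add: AJ_def adj_mat_def)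
  have cp2: "char_poly AJ = (\<Prod>e\<leftarrow>es. [:-e,1:])"
    unfolding AJ_def cp es_def
    by (simp only: list.map map_append map_replicate prod_list.Cons prod_list.append
      prod_list_replicate minus_minus mult.assoc)
  obtain B P Q where sd: "schur_decomposition AJ es = (B,P,Q)" by (cases "schur_decomposition AJ es") auto
  from schur_decomposition[OF AJc cp2 sd]
  have wit: "similar_mat_wit AJ B P Q" and utB: "upper_triangular B" and dB: "diag_mat B = es"
    by auto
  have dimA: "dim_row AJ = n" using AJc by simp
  from wit have Bc: "B \<in> carrier_mat n n" and Pc: "P \<in> carrier_mat n n" and Qc: "Q \<in> carrier_mat n n"
    and PQ: "P * Q = 1\<^sub>m n" and QP: "Q * P = 1\<^sub>m n" and AE: "AJ = P * B * Q"
    unfolding similar_mat_wit_def Let_def dimA by auto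
  define A where "A = cv n AJ"
  have zA: "zo n A" by (simp add: A_def)
  have sA: "tp A = A"
    using sg unfolding A_def tp_def cv_def AJ_def adj_mat_def simple_graph_def
    by (auto intro!: ext)
  have Aeq: "A = mm n (mm n (cv n P) (cv n B)) (cv n Q)"
    unfolding A_def AE using Pc Bc Qc by (simp add: cv_mult mm_assoc)
  have PQf: "mm n (cv n P) (cv n Q) = idm n" using cv_mult[OF Pc Qc] PQ cv_one by simp
  have QPf: "mm n (cv n Q) (cv n P) = idm n" using cv_mult[OF Qc Pc] QP cv_one by simp
  have utf: "ut (cv n B)" using utB Bc unfolding ut_def upper_triangular_def cv_def by auto
  have TF: "tr n (pe n A p) = sum_list (map (poly p) es)" for p
  proof -
    have "tr n (pe n A p) = (\<Sum>i<n. poly p (cv n B i i))"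
      by (rule trace_formula[OF zA zo_cv zo_cv zo_cv Aeq PQf QPf utf])
    also have "\<dots> = (\<Sum>i<n. poly p (B $$ (i,i)))" by (simp add: cv_def)
    also have "\<dots> = sum_list (map (poly p) (diag_mat B))"
      using Bc by (simp add: diag_mat_def sum_list_map_eq_sum_count2 sum_set_upt_conv_sum_list_nat[symmetric]
        atLeast0LessThan o_def)
    finally show ?thesis unfolding dB .
  qed
  note main = core[OF zA sA TF[unfolded es_def] r s]
  have Mv: "madd A (idm n) i j = Mv i j" if "i < n" "j < n" for i j
    using that by (simp add: madd_def A_def cv_def AJ_def adj_mat_def idm_def Mv_def)
  have qfe: "qf n (madd A (idm n)) x y = (\<Sum>i<n. x i * (\<Sum>j<n. Mv i j * y j))" for x y
    unfolding qf_def ip_def mv_def by (intro sum.cong refl) (auto simp: Mv intro!: sum.cong)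
  show ?thesis using main unfolding qfe by blast
qed

definition v5 :: "nat \<Rightarrow> nat \<Rightarrow> nat \<Rightarrow> nat \<Rightarrow> nat \<Rightarrow> real \<Rightarrow> real \<Rightarrow> real \<Rightarrow> real \<Rightarrow> real \<Rightarrow> nat \<Rightarrow> real" where
  "v5 v w p q t a b c d e = (\<lambda>i. if i = v then a else if i = w then b else if i = p then c
     else if i = q then d else if i = t then e else 0)"

lemma supp_sum:
  fixes M :: "nat \<Rightarrow> nat \<Rightarrow> real"
  assumes "S \<subseteq> {..<n}" "\<And>i. i \<notin> S \<Longrightarrow> x i = 0" "\<And>i. i \<notin> S \<Longrightarrow> y i = 0"
  shows "(\<Sum>i<n. x i * (\<Sum>j<n. M i j * y j)) = (\<Sum>i\<in>S. \<Sum>j\<in>S. x i * M i j * y j)"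
proof -
  have fS: "finite S" using assms(1) finite_subset by blast
  have inner: "(\<Sum>j<n. M i j * y j) = (\<Sum>j\<in>S. M i j * y j)" for i
    by (rule sum.mono_neutral_right) (use assms fS in auto)
  have "(\<Sum>i<n. x i * (\<Sum>j<n. M i j * y j)) = (\<Sum>i\<in>S. x i * (\<Sum>j<n. M i j * y j))"
    by (rule sum.mono_neutral_right) (use assms fS in auto)
  also have "\<dots> = (\<Sum>i\<in>S. \<Sum>j\<in>S. x i * M i j * y j)"
    by (simp add: inner sum_distrib_left mult.assoc)
  finally show ?thesis .
qed

lemma five_sum:
  fixes M :: "nat \<Rightarrow> nat \<Rightarrow> real"
  assumes "distinct [v,w,p,q,t]" "v < n" "w < n" "p < n" "q < n" "t < n"
  shows "(\<Sum>i<n. v5 v w p q t a1 b1 c1 d1 e1 i * (\<Sum>j<n. M i j * v5 v w p q t a2 b2 c2 d2 e2 j))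
   = (\<Sum>i\<in>{v,w,p,q,t}. \<Sum>j\<in>{v,w,p,q,t}. v5 v w p q t a1 b1 c1 d1 e1 i * M i j * v5 v w p q t a2 b2 c2 d2 e2 j)"
  by (rule supp_sum) (use assms in \<open>auto simp: v5_def\<close>)

lemma sum5: "distinct [v,w,p,q,t] \<Longrightarrow>
  (\<Sum>i\<in>{v,w,p,q,t}. g i) = g v + g w + g p + g q + (g t :: real)"
  by (simp add: add.assoc)

lemma config:
  fixes Mv :: "nat \<Rightarrow> nat \<Rightarrow> real"
  assumes N2: "\<forall>x y. \<not> ((\<Sum>i<n. x i * (\<Sum>j<n. Mv i j * x j)) < 0 \<and>
                     (\<Sum>i<n. y i * (\<Sum>j<n. Mv i j * y j)) < 0 \<and>
                     (\<Sum>i<n. x i * (\<Sum>j<n. Mv i j * y j)) = 0)"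
    and d: "distinct [v,w,p,q,t]" "v < n" "w < n" "p < n" "q < n" "t < n"
    and ex: "(\<Sum>i\<in>{v,w,p,q,t}. \<Sum>j\<in>{v,w,p,q,t}. v5 v w p q t a1 b1 c1 d1 e1 i * Mv i j * v5 v w p q t a1 b1 c1 d1 e1 j) < 0"
       "(\<Sum>i\<in>{v,w,p,q,t}. \<Sum>j\<in>{v,w,p,q,t}. v5 v w p q t a2 b2 c2 d2 e2 i * Mv i j * v5 v w p q t a2 b2 c2 d2 e2 j) < 0"
       "(\<Sum>i\<in>{v,w,p,q,t}. \<Sum>j\<in>{v,w,p,q,t}. v5 v w p q t a1 b1 c1 d1 e1 i * Mv i j * v5 v w p q t a2 b2 c2 d2 e2 j) = 0"
  shows False
  using N2[rule_format, of "v5 v w p q t a1 b1 c1 d1 e1" "v5 v w p q t a2 b2 c2 d2 e2"]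
  unfolding five_sum[OF d] using ex by blast

definition N2P :: "nat \<Rightarrow> (nat \<Rightarrow> nat \<Rightarrow> bool) \<Rightarrow> bool" where
  "N2P n E \<longleftrightarrow> (\<forall>x y. \<not> ((\<Sum>i<n. x i * (\<Sum>j<n. ((if E i j then 1 else 0) + (if i = j then 1 else (0::real))) * x j)) < 0 \<and>
                     (\<Sum>i<n. y i * (\<Sum>j<n. ((if E i j then 1 else 0) + (if i = j then 1 else (0::real))) * y j)) < 0 \<and>
                     (\<Sum>i<n. x i * (\<Sum>j<n. ((if E i j then 1 else 0) + (if i = j then 1 else (0::real))) * y j)) = 0))"

lemma sg_sym: "simple_graph n E \<Longrightarrow> i < n \<Longrightarrow> j < n \<Longrightarrow> E i j = E j i"
  unfolding simple_graph_def by blast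
lemma sg_irr: "simple_graph n E \<Longrightarrow> i < n \<Longrightarrow> \<not> E i i"
  unfolding simple_graph_def by blast

lemma cfg_a1:
  assumes N: "N2P n E" and sg: "simple_graph n E"
    and d: "distinct [v,w,p,q,t]" "v < n" "w < n" "p < n" "q < n" "t < n"
    and C: "E p q" "E p t" "E q t"
    and e: "E v p" "E v q" "\<not> E v t" "E w p" "E w t" "\<not> E w q"
  shows False
proof -
  have s: "E q p" "E t p" "E t q" "E p v" "E q v" "\<not> E t v" "E p w" "E t w" "\<not> E q w"
    using C e sg_sym[OF sg] d by blast+
  have i: "\<not> E v v" "\<not> E w w" "\<not> E p p" "\<not> E q q" "\<not> E t t" using sg_irr[OF sg] d by auto
  have vw: "E w v = E v w" using sg_sym[OF sg] d by blast
  have dd: "v \<noteq> w" "v \<noteq> p" "v \<noteq> q" "v \<noteq> t" "w \<noteq> p" "w \<noteq> q" "w \<noteq> t" "p \<noteq> q" "p \<noteq> t" "q \<noteq> t"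
    "w \<noteq> v" "p \<noteq> v" "q \<noteq> v" "t \<noteq> v" "p \<noteq> w" "q \<noteq> w" "t \<noteq> w" "q \<noteq> p" "t \<noteq> p" "t \<noteq> q"
    using d(1) by auto
  show False
    apply (rule config[OF N[unfolded N2P_def] d, of "-1" "-1" 2 "-1" 0 "-1" 1 1 0 "-2"])
    unfolding sum5[OF d(1)] by (cases "E v w"; simp add: v5_def dd C e s i vw)+
qed

lemma cfg_a2:
  assumes N: "N2P n E" and sg: "simple_graph n E"
    and d: "distinct [v,w,p,q,t]" "v < n" "w < n" "p < n" "q < n" "t < n"
    and C: "E p q" "E p t" "E q t"
    and e: "E v p" "E v q" "\<not> E v t" "E w p" "\<not> E w t" "\<not> E w q"
  shows False
proof -
  have s: "E q p" "E t p" "E t q" "E p v" "E q v" "\<not> E t v" "E p w" "\<not> E t w" "\<not> E q w"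
    using C e sg_sym[OF sg] d by blast+
  have i: "\<not> E v v" "\<not> E w w" "\<not> E p p" "\<not> E q q" "\<not> E t t" using sg_irr[OF sg] d by auto
  have vw: "E w v = E v w" using sg_sym[OF sg] d by blast
  have dd: "v \<noteq> w" "v \<noteq> p" "v \<noteq> q" "v \<noteq> t" "w \<noteq> p" "w \<noteq> q" "w \<noteq> t" "p \<noteq> q" "p \<noteq> t" "q \<noteq> t"
    "w \<noteq> v" "p \<noteq> v" "q \<noteq> v" "t \<noteq> v" "p \<noteq> w" "q \<noteq> w" "t \<noteq> w" "q \<noteq> p" "t \<noteq> p" "t \<noteq> q"
    using d(1) by auto
  show False
    apply (rule config[OF N[unfolded N2P_def] d, of "-1" "-1" 1 1 "-1" "-1" 1 "-1" 2 0])
    unfolding sum5[OF d(1)] by (cases "E v w"; simp add: v5_def dd C e s i vw)+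
qed

lemma cfg_b:
  assumes N: "N2P n E" and sg: "simple_graph n E"
    and d: "distinct [v,w,p,q,t]" "v < n" "w < n" "p < n" "q < n" "t < n"
    and C: "E p q" "E p t" "E q t"
    and e: "E v p" "\<not> E v q" "\<not> E v t" "\<not> E w p" "\<not> E w t" "E w q"
  shows False
proof -
  have s: "E q p" "E t p" "E t q" "E p v" "\<not> E q v" "\<not> E t v" "\<not> E p w" "\<not> E t w" "E q w"
    using C e sg_sym[OF sg] d by blast+
  have i: "\<not> E v v" "\<not> E w w" "\<not> E p p" "\<not> E q q" "\<not> E t t" using sg_irr[OF sg] d by auto
  have vw: "E w v = E v w" using sg_sym[OF sg] d by blast
  have dd: "v \<noteq> w" "v \<noteq> p" "v \<noteq> q" "v \<noteq> t" "w \<noteq> p" "w \<noteq> q" "w \<noteq> t" "p \<noteq> q" "p \<noteq> t" "q \<noteq> t"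
    "w \<noteq> v" "p \<noteq> v" "q \<noteq> v" "t \<noteq> v" "p \<noteq> w" "q \<noteq> w" "t \<noteq> w" "q \<noteq> p" "t \<noteq> p" "t \<noteq> q"
    using d(1) by auto
  show False
    apply (rule config[OF N[unfolded N2P_def] d, of "-1" "-1" 1 2 "-2" "-1" 1 1 "-1" "-1"])
    unfolding sum5[OF d(1)] by (cases "E v w"; simp add: v5_def dd C e s i vw)+
qed

lemma two_traces:
  assumes N: "N2P n E" and sg: "simple_graph n E"
    and Csub: "C \<subseteq> {0..<n}" and Ccl: "\<forall>u\<in>C. \<forall>u'\<in>C. u \<noteq> u' \<longrightarrow> E u u'"
    and v: "v < n" "v \<notin> C" and w: "w < n" "w \<notin> C"
    and ne: "{u\<in>C. E v u} \<noteq> {}" "{u\<in>C. E w u} \<noteq> {}"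
    and nC: "{u\<in>C. E v u} \<noteq> C" "{u\<in>C. E w u} \<noteq> C"
    and neq: "{u\<in>C. E v u} \<noteq> {u\<in>C. E w u}"
  shows "{u\<in>C. E w u} \<inter> {u\<in>C. E v u} = {} \<and> {u\<in>C. E w u} \<union> {u\<in>C. E v u} = C"
proof -
  have inC: "x \<in> C \<Longrightarrow> x < n" for x using Csub by auto
  have case1: False if "p \<in> C" "E v p" "E w p" "q \<in> C" "E v q" "\<not> E w q"
     and v: "v < n" "v \<notin> C" and w: "w < n" "w \<notin> C"
     and nC: "{u\<in>C. E v u} \<noteq> C" for v w p q
  proof (cases "\<exists>t\<in>C. E w t \<and> \<not> E v t")
    case True
    then obtain t where t: "t \<in> C" "E w t" "\<not> E v t" by blast
    have d: "distinct [v,w,p,q,t]" using that t by auto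
    show False
      by (rule cfg_a1[OF N sg d v(1) w(1) inC[OF that(1)] inC[OF that(4)] inC[OF t(1)]])
        (use that t Ccl d in auto)
  next
    case False
    obtain t where t: "t \<in> C" "\<not> E v t" using nC by blast
    hence t2: "\<not> E w t" using False by blast
    have d: "distinct [v,w,p,q,t]" using that t by auto
    show False
      by (rule cfg_a2[OF N sg d v(1) w(1) inC[OF that(1)] inC[OF that(4)] inC[OF t(1)]])
        (use that t t2 Ccl d in auto)
  qed
  show ?thesis
  proof (rule ccontr)
    assume H: "\<not> ?thesis"
    show False
    proof (cases "\<exists>p\<in>C. E v p \<and> E w p")
      case True
      then obtain p where p: "p \<in> C" "E v p" "E w p" by blast
      show False
      proof (cases "\<exists>q\<in>C. E v q \<and> \<not> E w q")
        case True
        then obtain q where "q \<in> C" "E v q" "\<not> E w q" by blast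
        thus False using case1[OF p _ _ _ v w nC(1)] by blast
      next
        case False
        then obtain q where "q \<in> C" "E w q" "\<not> E v q" using neq by blast
        thus False using case1[OF p(1,3,2) _ _ _ w v nC(2)] by blast
      qed
    next
      case False
      hence disj: "{u\<in>C. E w u} \<inter> {u\<in>C. E v u} = {}" by blast
      with H obtain t where t: "t \<in> C" "\<not> E v t" "\<not> E w t" by blast
      obtain p where p: "p \<in> C" "E v p" using ne(1) by blast
      obtain q where q: "q \<in> C" "E w q" using ne(2) by blast
      have d: "distinct [v,w,p,q,t]" using p q t v w False by auto
      show False
        by (rule cfg_b[OF N sg d v(1) w(1) inC[OF p(1)] inC[OF q(1)] inC[OF t(1)]])
          (use p q t Ccl d False in auto)
    qed
  qed
qed

theorem lemma4p1:
  fixes n :: nat and E :: "nat \<Rightarrow> nat \<Rightarrow> bool" and C :: "nat set"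
  assumes "in_F n E"
    and "is_max_clique n E C"
    and "\<forall>D. is_max_clique n E D \<longrightarrow> boundary_edges n E C \<le> boundary_edges n E D"
  shows "\<exists>X Y. X \<noteq> {} \<and> Y \<noteq> {} \<and> X \<inter> Y = {} \<and> X \<union> Y = C \<and>
           (\<forall>v\<in>{0..<n} - C. {u\<in>C. E v u} = X \<or> {u\<in>C. E v u} = Y \<or> {u\<in>C. E v u} = {})"
proof -
  have sg: "simple_graph n E" and conn: "connected_graph n E" using assms(1) by (auto simp: in_F_def)
  have spec: "(\<exists>w. (\<Sum>i<n. w i * (\<Sum>j<n. ((if E i j then 1 else 0) + (if i = j then 1 else (0::real))) * w j)) < 0)"
    and N: "N2P n E"
    using inF_spec[OF assms(1)] unfolding N2P_def by auto
  have Csub: "C \<subseteq> {0..<n}" and Ccl: "\<forall>u\<in>C. \<forall>u'\<in>C. u \<noteq> u' \<longrightarrow> E u u'"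
    and Cmax: "\<And>D. is_clique n E D \<Longrightarrow> card D \<le> card C"
    using assms(2) unfolding is_max_clique_def is_clique_def by auto
  have finC: "finite C" using Csub finite_subset by blast
  have n0: "n > 0" using conn by (simp add: connected_graph_def)
  have "is_clique n E {0}" using n0 by (simp add: is_clique_def)
  hence "card C \<ge> 1" using Cmax[of "{0}"] by simp
  then obtain c0 where c0: "c0 \<in> C" using card_gt_0_iff[of C] by (metis all_not_in_conv card.empty not_one_le_zero)
  define T where "T v = {u\<in>C. E v u}" for v
  have TC: "T v \<noteq> C" if v: "v \<in> {0..<n} - C" for v
  proof
    assume Tv: "T v = C"
    have "is_clique n E (insert v C)"
      unfolding is_clique_def
    proof (intro conjI ballI impI)
      show "insert v C \<subseteq> {0..<n}" using Csub v by auto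
    next
      fix x y assume xy: "x \<in> insert v C" "y \<in> insert v C" "x \<noteq> y"
      have Ev: "E v u" if "u \<in> C" for u using Tv that unfolding T_def by blast
      have Ev': "E u v" if "u \<in> C" for u using Ev[OF that] sg_sym[OF sg, of u v] Csub v that by auto
      show "E x y" using xy Ccl Ev Ev' by auto
    qed
    hence "card (insert v C) \<le> card C" by (rule Cmax)
    thus False using finC v by simp
  qed
  have ex: "\<exists>v0\<in>{0..<n} - C. T v0 \<noteq> {}"
  proof (rule ccontr)
    assume H: "\<not> ?thesis"
    have allC: "u \<in> C" if "u < n" for u
    proof -
      have "(\<lambda>x y. x < n \<and> y < n \<and> E x y)\<^sup>*\<^sup>* c0 u"
        using conn c0 Csub that unfolding connected_graph_def by auto
      thus ?thesis
      proof (induct rule: rtranclp_induct)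
        case base thus ?case by (rule c0)
      next
        case (step y z)
        show ?case
        proof (rule ccontr)
          assume "z \<notin> C"
          hence "T z = {}" using H step by auto
          moreover have "E z y" using step sg_sym[OF sg] by blast
          ultimately show False using step unfolding T_def by blast
        qed
      qed
    qed
    have Mv1: "((if E i j then 1 else 0) + (if i = j then 1 else (0::real))) = 1" if "i < n" "j < n" for i j
    proof (cases "i = j")
      case True thus ?thesis using sg_irr[OF sg] that by simp
    next
      case False thus ?thesis using Ccl allC that by simp
    qed
    from spec obtain w where w: "(\<Sum>i<n. w i * (\<Sum>j<n. ((if E i j then 1 else 0) + (if i = j then 1 else (0::real))) * w j)) < 0" by blast
    have "(\<Sum>i<n. w i * (\<Sum>j<n. ((if E i j then 1 else 0) + (if i = j then 1 else (0::real))) * w j))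
       = (\<Sum>i<n. w i * (\<Sum>j<n. w j))"
      by (intro sum.cong refl) (auto simp: Mv1 intro!: sum.cong)
    also have "\<dots> = (\<Sum>i<n. w i) ^ 2" by (simp add: power2_eq_square sum_distrib_right)
    finally show False using w by simp
  qed
  then obtain v0 where v0: "v0 \<in> {0..<n} - C" "T v0 \<noteq> {}" by blast
  define X where "X = T v0"
  define Y where "Y = C - X"
  have XC: "X \<subseteq> C" unfolding X_def T_def by auto
  show ?thesis
  proof (intro exI conjI ballI)
    show "X \<noteq> {}" using v0 X_def by simp
    show "Y \<noteq> {}" using TC[OF v0(1)] XC unfolding X_def Y_def by blast
    show "X \<inter> Y = {}" unfolding Y_def by blast
    show "X \<union> Y = C" unfolding Y_def using XC by blast
  next
    fix v assume v: "v \<in> {0..<n} - C"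
    show "{u\<in>C. E v u} = X \<or> {u\<in>C. E v u} = Y \<or> {u\<in>C. E v u} = {}"
    proof (cases "T v = {} \<or> T v = X")
      case True thus ?thesis unfolding T_def by auto
    next
      case False
      have "T v \<inter> T v0 = {} \<and> T v \<union> T v0 = C"
        unfolding T_def
        by (rule two_traces[OF N sg Csub Ccl])
          (use v v0 TC[OF v] TC[OF v0(1)] False in \<open>auto simp: T_def X_def\<close>)
      hence "T v = Y" unfolding Y_def X_def T_def by blast
      thus ?thesis unfolding T_def by simp
    qed
  qed
qed

end
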